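(* Every formula of $\mathcal{L}(\Rightarrow)$ is provably equivalent in the Yalcin logic to a formula of $\mathcal{L}$; that is, for every $\varphi\in\mathcal{L}(\Rightarrow)$ there is $\varphi'\in\mathcal{L}$ such that $\varphi\leftrightarrow\varphi'$ is a theorem of the Yalcin logic.
   Context: The language $\mathcal{L}(\Rightarrow)$ is given by $\varphi::= p\mid \neg\varphi\mid (\varphi\wedge\varphi)\mid \Box\varphi \mid (\varphi\Rightarrow\varphi)$, with $p$ ranging over a fixed set of propositional variables; $\vee,\to,\leftrightarrow,\bot$ as usual and $\Diamond\varphi:=\neg\Box\neg\varphi$. $\mathcal{L}$ is the set of formulas not containing $\Rightarrow$. A formula is nonmodal if it contains neither $\Rightarrow$ nor $\Box$. The Yalcin logic is the smallest set of formulas of $\mathcal{L}(\Rightarrow)$ closed under replacement of equivalents (if $\alpha\leftrightarrow\beta$ is in the set and $\varphi'$ results from $\varphi$ by replacing an occurrence of $\alpha$ by $\beta$, then $\varphi\leftrightarrow\varphi'$ is in the set), modus ponens for $\to$, and necessitation for $\Box$, and containing all substitution instances of propositional tautologies and all instances of: K: $\Box(\varphi\to\psi)\to(\Box\varphi\to\Box\psi)$; 4: $\Diamond\Diamond\varphi\to\Diamond\varphi$; 5: $\Diamond\Box\varphi\to\Box\varphi$; I1: $(\varphi\Rightarrow\pi)\leftrightarrow\Box(\varphi\to\pi)$ for $\pi$ nonmodal; I2: $(\varphi\Rightarrow(\alpha\wedge\beta))\leftrightarrow((\varphi\Rightarrow\alpha)\wedge(\varphi\Rightarrow\beta))$; I3: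 $(\varphi\Rightarrow\alpha)\to(\varphi\Rightarrow(\alpha\vee\beta))$; I4: $(\varphi\Rightarrow\alpha)\to(\varphi\Rightarrow\Box\alpha)$; I5: $((\varphi\Rightarrow(\alpha\vee\Box\beta))\wedge\neg(\varphi\Rightarrow\beta))\to(\varphi\Rightarrow\alpha)$; I6: $((\varphi\Rightarrow(\alpha\vee\Diamond\beta))\wedge(\varphi\Rightarrow\neg\beta))\to(\varphi\Rightarrow\alpha)$; I7: $\neg(\varphi\Rightarrow\beta)\to(\varphi\Rightarrow\Diamond\neg\beta)$. *)

theory Defs
  imports Main
begin

datatype 'p fm =
    Var 'p
  | Neg "'p fm"
  | Conj "'p fm" "'p fm"
  | Box "'p fm"
  | Cond "'p fm" "'p fm"

definition Disj :: "'p fm \<Rightarrow> 'p fm \<Rightarrow> 'p fm" where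
  "Disj a b = Neg (Conj (Neg a) (Neg b))"
definition Imp :: "'p fm \<Rightarrow> 'p fm \<Rightarrow> 'p fm" where
  "Imp a b = Neg (Conj a (Neg b))"
definition Iff :: "'p fm \<Rightarrow> 'p fm \<Rightarrow> 'p fm" where
  "Iff a b = Conj (Imp a b) (Imp b a)"
definition Dia :: "'p fm \<Rightarrow> 'p fm" where
  "Dia a = Neg (Box (Neg a))"

fun inL :: "'p fm \<Rightarrow> bool" where
  "inL (Var p) = True"
| "inL (Neg a) = inL a"
| "inL (Conj a b) = (inL a \<and> inL b)"
| "inL (Box a) = inL a"
| "inL (Cond a b) = False"

fun nonmodal :: "'p fm \<Rightarrow> bool" where
  "nonmodal (Var p) = True"
| "nonmodal (Neg a) = nonmodal a"
| "nonmodal (Conj a b) = (nonmodal a \<and> nonmodal b)"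
| "nonmodal (Box a) = False"
| "nonmodal (Cond a b) = False"

text \<open>Classical truth-value evaluation (only meaningful on nonmodal formulas).\<close>
fun peval :: "('p \<Rightarrow> bool) \<Rightarrow> 'p fm \<Rightarrow> bool" where
  "peval v (Var p) = v p"
| "peval v (Neg a) = (\<not> peval v a)"
| "peval v (Conj a b) = (peval v a \<and> peval v b)"
| "peval v (Box a) = False"
| "peval v (Cond a b) = False"

fun subst :: "('a \<Rightarrow> 'b fm) \<Rightarrow> 'a fm \<Rightarrow> 'b fm" where
  "subst s (Var p) = s p"
| "subst s (Neg a) = Neg (subst s a)"
| "subst s (Conj a b) = Conj (subst s a) (subst s b)"
| "subst s (Box a) = Box (subst s a)"
| "subst s (Cond a b) = Cond (subst s a) (subst s b)"

text \<open>Substitution instances of propositional tautologies (tautologies over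
  countably many propositional letters, indexed by nat).\<close>
definition taut_inst :: "'p fm \<Rightarrow> bool" where
  "taut_inst \<phi> \<longleftrightarrow> (\<exists>(t :: nat fm) s. nonmodal t \<and> (\<forall>v. peval v t) \<and> \<phi> = subst s t)"

inductive repl1 :: "'p fm \<Rightarrow> 'p fm \<Rightarrow> 'p fm \<Rightarrow> 'p fm \<Rightarrow> bool" for a b where
  here: "repl1 a b a b"
| neg: "repl1 a b x y \<Longrightarrow> repl1 a b (Neg x) (Neg y)"
| conjL: "repl1 a b x y \<Longrightarrow> repl1 a b (Conj x z) (Conj y z)"
| conjR: "repl1 a b x y \<Longrightarrow> repl1 a b (Conj z x) (Conj z y)"
| box: "repl1 a b x y \<Longrightarrow> repl1 a b (Box x) (Box y)"
| condL: "repl1 a b x y \<Longrightarrow> repl1 a b (Cond x z) (Cond y z)"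
| condR: "repl1 a b x y \<Longrightarrow> repl1 a b (Cond z x) (Cond z y)"

inductive_set yalcin :: "'p fm set" where
  Taut: "taut_inst \<phi> \<Longrightarrow> \<phi> \<in> yalcin"
| AxK: "Imp (Box (Imp \<phi> \<psi>)) (Imp (Box \<phi>) (Box \<psi>)) \<in> yalcin"
| Ax4: "Imp (Dia (Dia \<phi>)) (Dia \<phi>) \<in> yalcin"
| Ax5: "Imp (Dia (Box \<phi>)) (Box \<phi>) \<in> yalcin"
| I1: "nonmodal \<pi> \<Longrightarrow> Iff (Cond \<phi> \<pi>) (Box (Imp \<phi> \<pi>)) \<in> yalcin"
| I2: "Iff (Cond \<phi> (Conj \<alpha> \<beta>)) (Conj (Cond \<phi> \<alpha>) (Cond \<phi> \<beta>)) \<in> yalcin"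
| I3: "Imp (Cond \<phi> \<alpha>) (Cond \<phi> (Disj \<alpha> \<beta>)) \<in> yalcin"
| I4: "Imp (Cond \<phi> \<alpha>) (Cond \<phi> (Box \<alpha>)) \<in> yalcin"
| I5: "Imp (Conj (Cond \<phi> (Disj \<alpha> (Box \<beta>))) (Neg (Cond \<phi> \<beta>))) (Cond \<phi> \<alpha>) \<in> yalcin"
| I6: "Imp (Conj (Cond \<phi> (Disj \<alpha> (Dia \<beta>))) (Cond \<phi> (Neg \<beta>))) (Cond \<phi> \<alpha>) \<in> yalcin"
| I7: "Imp (Neg (Cond \<phi> \<beta>)) (Cond \<phi> (Dia (Neg \<beta>))) \<in> yalcin"
| MP: "Imp \<phi> \<psi> \<in> yalcin \<Longrightarrow> \<phi> \<in> yalcin \<Longrightarrow> \<psi> \<in> yalcin"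
| Nec: "\<phi> \<in> yalcin \<Longrightarrow> Box \<phi> \<in> yalcin"
| RE: "Iff \<alpha> \<beta> \<in> yalcin \<Longrightarrow> repl1 \<alpha> \<beta> \<phi> \<phi>' \<Longrightarrow> Iff \<phi> \<phi>' \<in> yalcin"

end

theory Submission
  imports Defs
begin

fun teval :: "('p fm \<Rightarrow> bool) \<Rightarrow> 'p fm \<Rightarrow> bool" where
  "teval V (Neg a) = (\<not> teval V a)"
| "teval V (Conj a b) = (teval V a \<and> teval V b)"
| "teval V a = V a"

fun atoms :: "'p fm \<Rightarrow> 'p fm set" where
  "atoms (Neg a) = atoms a"
| "atoms (Conj a b) = atoms a \<union> atoms b"
| "atoms a = {a}"

fun abst :: "('p fm \<Rightarrow> nat) \<Rightarrow> 'p fm \<Rightarrow> nat fm" where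
  "abst f (Neg a) = Neg (abst f a)"
| "abst f (Conj a b) = Conj (abst f a) (abst f b)"
| "abst f a = Var (f a)"

lemma finite_atoms: "finite (atoms a)"
  by (induction a) auto

lemma abst_nonmodal: "nonmodal (abst f a)"
  by (induction a) auto

lemma abst_peval: "peval v (abst f a) = teval (v \<circ> f) a"
  by (induction a) auto

lemma abst_subst: "atoms a \<subseteq> A \<Longrightarrow> inj_on f A \<Longrightarrow> subst (inv_into A f) (abst f a) = a"
  by (induction a) auto

lemma taut: assumes "\<forall>V. teval V a" shows "a \<in> yalcin"
proof -
  obtain f :: "'a fm \<Rightarrow> nat" and n where "f ` atoms a = {i. i<n}" "inj_on f (atoms a)"
    using finite_imp_inj_to_nat_seg[OF finite_atoms] by blast
  then have "taut_inst a"
    unfolding taut_inst_def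
    by (intro exI[of _ "abst f a"] exI[of _ "inv_into (atoms a) f"])
       (simp add: abst_nonmodal abst_peval assms abst_subst)
  then show ?thesis by (rule yalcin.Taut)
qed

lemma teval_simps[simp]:
  "teval V (Imp a b) = (teval V a \<longrightarrow> teval V b)"
  "teval V (Disj a b) = (teval V a \<or> teval V b)"
  "teval V (Iff a b) = (teval V a \<longleftrightarrow> teval V b)"
  "teval V (Dia a) = (\<not> V (Box (Neg a)))"
  by (auto simp: Imp_def Disj_def Iff_def Dia_def)

lemma tcL: "(\<forall>x\<in>set ps. x \<in> yalcin) \<Longrightarrow> (\<forall>V. (\<forall>x\<in>set ps. teval V x) \<longrightarrow> teval V c) \<Longrightarrow> c \<in> yalcin"
proof (induction ps arbitrary: c)
  case Nil
  then show ?case by (simp add: taut)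
next
  case (Cons p ps)
  have "Imp p c \<in> yalcin" using Cons by (intro Cons.IH) auto
  then show ?case using Cons.prems by (auto intro: yalcin.MP)
qed

lemma condR_cong: "Iff a b \<in> yalcin \<Longrightarrow> Iff (Cond c a) (Cond c b) \<in> yalcin"
  by (rule yalcin.RE) (auto intro: repl1.intros)
lemma condL_cong: "Iff a b \<in> yalcin \<Longrightarrow> Iff (Cond a c) (Cond b c) \<in> yalcin"
  by (rule yalcin.RE) (auto intro: repl1.intros)

definition Tt :: "'p fm" where "Tt = Neg (Conj (Var undefined) (Neg (Var undefined)))"
definition Ff :: "'p fm" where "Ff = Conj (Var undefined) (Neg (Var undefined))"

lemma E1: "Iff (Cond \<phi> (Disj \<alpha> (Box \<beta>))) (Disj (Cond \<phi> \<alpha>) (Cond \<phi> \<beta>)) \<in> yalcin"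
proof -
  have c: "Iff (Cond \<phi> (Disj (Box \<beta>) \<alpha>)) (Cond \<phi> (Disj \<alpha> (Box \<beta>))) \<in> yalcin"
    by (rule condR_cong, rule taut) auto
  show ?thesis
    apply (rule tcL[of "[Imp (Conj (Cond \<phi> (Disj \<alpha> (Box \<beta>))) (Neg (Cond \<phi> \<beta>))) (Cond \<phi> \<alpha>),
       Imp (Cond \<phi> \<alpha>) (Cond \<phi> (Disj \<alpha> (Box \<beta>))),
       Imp (Cond \<phi> \<beta>) (Cond \<phi> (Box \<beta>)),
       Imp (Cond \<phi> (Box \<beta>)) (Cond \<phi> (Disj (Box \<beta>) \<alpha>)),
       Iff (Cond \<phi> (Disj (Box \<beta>) \<alpha>)) (Cond \<phi> (Disj \<alpha> (Box \<beta>)))]"])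
    using c by (auto intro: yalcin.intros)
qed

lemma E2: "Iff (Cond \<phi> (Disj \<alpha> (Neg (Box \<beta>)))) (Disj (Cond \<phi> \<alpha>) (Neg (Cond \<phi> \<beta>))) \<in> yalcin"
proof -
  have nn: "Iff (Neg (Neg \<beta>)) \<beta> \<in> yalcin" by (rule taut) auto
  have r1: "Iff (Cond \<phi> (Disj \<alpha> (Dia (Neg \<beta>)))) (Cond \<phi> (Disj \<alpha> (Neg (Box \<beta>)))) \<in> yalcin"
    by (rule yalcin.RE[OF nn]) (auto simp: Disj_def Dia_def intro!: repl1.intros)
  have r2: "Iff (Cond \<phi> (Neg (Neg \<beta>))) (Cond \<phi> \<beta>) \<in> yalcin"
    by (rule condR_cong[OF nn])
  have r3: "Iff (Cond \<phi> (Disj (Dia (Neg \<beta>)) \<alpha>)) (Cond \<phi> (Disj (Neg (Box \<beta>)) \<alpha>)) \<in> yalcin"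
    by (rule yalcin.RE[OF nn]) (auto simp: Disj_def Dia_def intro!: repl1.intros)
  have r4: "Iff (Cond \<phi> (Disj (Neg (Box \<beta>)) \<alpha>)) (Cond \<phi> (Disj \<alpha> (Neg (Box \<beta>)))) \<in> yalcin"
    by (rule condR_cong, rule taut) auto
  show ?thesis
    apply (rule tcL[of "[Imp (Conj (Cond \<phi> (Disj \<alpha> (Dia (Neg \<beta>)))) (Cond \<phi> (Neg (Neg \<beta>)))) (Cond \<phi> \<alpha>),
       Imp (Cond \<phi> \<alpha>) (Cond \<phi> (Disj \<alpha> (Neg (Box \<beta>)))),
       Imp (Neg (Cond \<phi> \<beta>)) (Cond \<phi> (Dia (Neg \<beta>))),
       Imp (Cond \<phi> (Dia (Neg \<beta>))) (Cond \<phi> (Disj (Dia (Neg \<beta>)) \<alpha>)),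
       Iff (Cond \<phi> (Disj \<alpha> (Dia (Neg \<beta>)))) (Cond \<phi> (Disj \<alpha> (Neg (Box \<beta>)))),
       Iff (Cond \<phi> (Neg (Neg \<beta>))) (Cond \<phi> \<beta>),
       Iff (Cond \<phi> (Disj (Dia (Neg \<beta>)) \<alpha>)) (Cond \<phi> (Disj (Neg (Box \<beta>)) \<alpha>)),
       Iff (Cond \<phi> (Disj (Neg (Box \<beta>)) \<alpha>)) (Cond \<phi> (Disj \<alpha> (Neg (Box \<beta>))))]"])
    using r1 r2 r3 r4 by (auto intro: yalcin.intros)
qed


fun nb :: "'p fm \<Rightarrow> nat" where
  "nb (Var p) = 0"
| "nb (Neg a) = nb a"
| "nb (Conj a b) = nb a + nb b"
| "nb (Box a) = Suc (nb a)"
| "nb (Cond a b) = nb a + nb b"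

fun ra :: "'p fm \<Rightarrow> 'p fm \<Rightarrow> 'p fm \<Rightarrow> 'p fm" where
  "ra A X (Neg a) = Neg (ra A X a)"
| "ra A X (Conj a b) = Conj (ra A X a) (ra A X b)"
| "ra A X a = (if a = A then X else a)"

lemma ra_inL: "inL \<psi> \<Longrightarrow> inL X \<Longrightarrow> inL (ra A X \<psi>)"
  by (induction \<psi>) auto

lemma ra_nb_le: "nb X = 0 \<Longrightarrow> nb (ra A X \<psi>) \<le> nb \<psi>"
  by (induction \<psi>) auto

lemma ra_nb_less: "nb X = 0 \<Longrightarrow> Box \<beta> \<in> atoms \<psi> \<Longrightarrow> nb (ra (Box \<beta>) X \<psi>) < nb \<psi>"
proof (induction \<psi>)
  case (Conj a b)
  then show ?case using ra_nb_le[of X "Box \<beta>" a] ra_nb_le[of X "Box \<beta>" b] by fastforce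
qed auto

lemma ra_teval: "V A = teval V X \<Longrightarrow> teval V (ra A X \<psi>) = teval V \<psi>"
  by (induction \<psi>) auto

lemma atoms_nb: "a \<in> atoms \<psi> \<Longrightarrow> nb a \<le> nb \<psi>"
  by (induction \<psi>) auto

lemma atoms_inL: "a \<in> atoms \<psi> \<Longrightarrow> inL \<psi> \<Longrightarrow> inL a"
  by (induction \<psi>) auto

lemma box_atom: "inL \<psi> \<Longrightarrow> \<not> nonmodal \<psi> \<Longrightarrow> \<exists>\<beta>. Box \<beta> \<in> atoms \<psi>"
  by (induction \<psi>) auto

lemma Tt_simps[simp]: "teval V Tt" "inL Tt" "nb Tt = 0"
  by (auto simp: Tt_def)
lemma Ff_simps[simp]: "\<not> teval V Ff" "inL Ff" "nb Ff = 0"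
  by (auto simp: Ff_def)

lemma key: "inL \<phi> \<Longrightarrow> inL \<psi> \<Longrightarrow> \<exists>\<chi>. inL \<chi> \<and> Iff (Cond \<phi> \<psi>) \<chi> \<in> yalcin"
proof (induction "nb \<psi>" arbitrary: \<psi> rule: less_induct)
  case less
  show ?case
  proof (cases "nonmodal \<psi>")
    case True
    then show ?thesis using less.prems
      by (intro exI[of _ "Box (Imp \<phi> \<psi>)"] conjI yalcin.I1) (auto simp: Imp_def)
  next
    case False
    then obtain \<beta> where b: "Box \<beta> \<in> atoms \<psi>" using box_atom less.prems by blast
    define \<psi>1 where "\<psi>1 = ra (Box \<beta>) Tt \<psi>"
    define \<psi>0 where "\<psi>0 = ra (Box \<beta>) Ff \<psi>"
    have "inL \<beta>" using atoms_inL[OF b] less.prems by simp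
    have "nb \<beta> < nb \<psi>" using atoms_nb[OF b] by simp
    then obtain \<chi>b where cb: "inL \<chi>b" "Iff (Cond \<phi> \<beta>) \<chi>b \<in> yalcin"
      using less.hyps \<open>inL \<beta>\<close> less.prems by blast
    obtain \<chi>1 where c1: "inL \<chi>1" "Iff (Cond \<phi> \<psi>1) \<chi>1 \<in> yalcin"
      using less.hyps[of \<psi>1] ra_nb_less[OF _ b] ra_inL less.prems unfolding \<psi>1_def by fastforce
    obtain \<chi>0 where c0: "inL \<chi>0" "Iff (Cond \<phi> \<psi>0) \<chi>0 \<in> yalcin"
      using less.hyps[of \<psi>0] ra_nb_less[OF _ b] ra_inL less.prems unfolding \<psi>0_def by fastforce
    have e: "Iff \<psi> (Conj (Disj \<psi>1 (Neg (Box \<beta>))) (Disj \<psi>0 (Box \<beta>))) \<in> yalcin"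
    proof (rule taut, intro allI)
      fix V :: "'a fm \<Rightarrow> bool"
      show "teval V (Iff \<psi> (Conj (Disj \<psi>1 (Neg (Box \<beta>))) (Disj \<psi>0 (Box \<beta>))))"
        using ra_teval[of V "Box \<beta>" Tt \<psi>] ra_teval[of V "Box \<beta>" Ff \<psi>]
        unfolding \<psi>1_def \<psi>0_def by (cases "V (Box \<beta>)") auto
    qed
    have e2: "Iff (Cond \<phi> \<psi>) (Cond \<phi> (Conj (Disj \<psi>1 (Neg (Box \<beta>))) (Disj \<psi>0 (Box \<beta>)))) \<in> yalcin"
      by (rule condR_cong[OF e])
    show ?thesis
      apply (intro exI[of _ "Conj (Disj \<chi>1 (Neg \<chi>b)) (Disj \<chi>0 \<chi>b)"] conjI)
      using cb c1 c0 apply (simp add: Disj_def)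
      apply (rule tcL[of "[Iff (Cond \<phi> \<psi>) (Cond \<phi> (Conj (Disj \<psi>1 (Neg (Box \<beta>))) (Disj \<psi>0 (Box \<beta>)))),
         Iff (Cond \<phi> (Conj (Disj \<psi>1 (Neg (Box \<beta>))) (Disj \<psi>0 (Box \<beta>))))
             (Conj (Cond \<phi> (Disj \<psi>1 (Neg (Box \<beta>)))) (Cond \<phi> (Disj \<psi>0 (Box \<beta>)))),
         Iff (Cond \<phi> (Disj \<psi>1 (Neg (Box \<beta>)))) (Disj (Cond \<phi> \<psi>1) (Neg (Cond \<phi> \<beta>))),
         Iff (Cond \<phi> (Disj \<psi>0 (Box \<beta>))) (Disj (Cond \<phi> \<psi>0) (Cond \<phi> \<beta>)),
         Iff (Cond \<phi> \<beta>) \<chi>b, Iff (Cond \<phi> \<psi>1) \<chi>1, Iff (Cond \<phi> \<psi>0) \<chi>0]"])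
      using e2 cb c1 c0 E1 E2 yalcin.I2 by auto
  qed
qed

theorem lemma6:
  fixes \<phi> :: "'p fm"
  shows "\<exists>\<phi>'. inL \<phi>' \<and> Iff \<phi> \<phi>' \<in> yalcin"
proof (induction \<phi>)
  case (Var x)
  then show ?case by (intro exI[of _ "Var x"]) (auto intro: taut)
next
  case (Neg a)
  then obtain a' where "inL a'" "Iff a a' \<in> yalcin" by blast
  then show ?case
    by (intro exI[of _ "Neg a'"]) (auto intro: yalcin.RE repl1.intros)
next
  case (Box a)
  then obtain a' where "inL a'" "Iff a a' \<in> yalcin" by blast
  then show ?case
    by (intro exI[of _ "Box a'"]) (auto intro: yalcin.RE repl1.intros)
next
  case (Conj a b)
  then obtain a' b' where h: "inL a'" "Iff a a' \<in> yalcin" "inL b'" "Iff b b' \<in> yalcin" by blast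
  have 1: "Iff (Conj a b) (Conj a' b) \<in> yalcin" using h by (auto intro: yalcin.RE repl1.intros)
  have 2: "Iff (Conj a' b) (Conj a' b') \<in> yalcin" using h by (auto intro: yalcin.RE repl1.intros)
  show ?case
    apply (intro exI[of _ "Conj a' b'"] conjI)
    using h apply simp
    apply (rule tcL[of "[Iff (Conj a b) (Conj a' b), Iff (Conj a' b) (Conj a' b')]"])
    using 1 2 by auto
next
  case (Cond a b)
  then obtain a' b' where h: "inL a'" "Iff a a' \<in> yalcin" "inL b'" "Iff b b' \<in> yalcin" by blast
  have 1: "Iff (Cond a b) (Cond a' b) \<in> yalcin" using h by (auto intro: condL_cong)
  have 2: "Iff (Cond a' b) (Cond a' b') \<in> yalcin" using h by (auto intro: condR_cong)
  obtain c where c: "inL c" "Iff (Cond a' b') c \<in> yalcin" using key h by blast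
  show ?case
    apply (intro exI[of _ c] conjI)
    using c apply simp
    apply (rule tcL[of "[Iff (Cond a b) (Cond a' b), Iff (Cond a' b) (Cond a' b'), Iff (Cond a' b') c]"])
    using 1 2 c by auto
qed

end
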